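(* For $n\ge3$ and $1\le k_1<k_2\le n-1$, $$\begin{aligned}E\Big[E[1_{k_2}^{(n)}\mid\mathcal{Y}_n]\,E[1_{k_1}^{(n)}\mid\mathcal{Y}_n]\Big]={}&\frac{4(n+1)^2}{(n-1)^2(k_1+1)(k_1+2)(k_2+1)(k_2+2)}\\&-\frac{8(n+1)\,(3n-(k_2-2))\,(n-(k_2+1))}{n(n-1)^2(k_1+1)(k_1+2)(k_2+1)(k_2+2)(k_2+3)(k_2+4)}.\end{aligned}$$
   Context: Fix $n\ge 3$. A Yule tree with speciation rate 1 on $n$ tips: start with a single lineage; each lineage independently splits into two at rate 1; the process is stopped just before the $n$-th speciation event, so the tree has $n$ tips and $n-1$ speciation (internal) nodes, numbered $1,\dots,n-1$ chronologically from the root; at each speciation the splitting lineage is uniformly chosen among current lineages. $\mathcal{Y}_n$ is the σ-field generated by the tree (topology and branch lengths). For $1\le k\le n-1$, $1_k^{(n)}$ is the indicator that an unordered pair of distinct tips, chosen uniformly at random (independently of everything else given the tree), has its most recent common ancestor at the $k$-th speciation event; thus $E[1_k^{(n)}\mid\mathcal{Y}_n]$ is the fraction of the $\binom n2$ pairs of tips that coalesce at the $k$-th speciation event. *)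

theory Defs
  imports "HOL-Probability.Probability"
begin

text \<open>Ranked topology of a Yule tree, encoded by the sequence of splitting choices.
  Before the j-th speciation event (j = 1..n-1) there are j lineages, indexed 0..j-1.
  The j-th entry cs!(j-1) is the index of the splitting lineage, chosen uniformly in {0..<j}.
  Convention: the splitting lineage i is replaced by its two daughters, which get
  indices i and j (the new one is appended).  Tips of the final tree are 0..n-1.\<close>

fun yule_choices :: "nat \<Rightarrow> nat list pmf" where
  "yule_choices 0 = return_pmf []"
| "yule_choices (Suc m) =
     bind_pmf (yule_choices m) (\<lambda>cs. map_pmf (\<lambda>c. cs @ [c]) (pmf_of_set {0..<Suc m}))"

text \<open>Index at time j (j lineages) of the ancestor of lineage i at time j+1.\<close>
definition parent_lin :: "nat list \<Rightarrow> nat \<Rightarrow> nat \<Rightarrow> nat" where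
  "parent_lin cs j i = (if i = j then cs ! (j - 1) else i)"

text \<open>Index at time m (m lineages) of the ancestral lineage of tip t of the n-tip tree.\<close>
definition anc_lin :: "nat \<Rightarrow> nat list \<Rightarrow> nat \<Rightarrow> nat \<Rightarrow> nat" where
  "anc_lin n cs m t = foldr (parent_lin cs) [m..<n] t"

definition coal_at :: "nat \<Rightarrow> nat list \<Rightarrow> nat \<Rightarrow> nat \<Rightarrow> nat \<Rightarrow> bool" where
  "coal_at n cs k a b \<longleftrightarrow>
     anc_lin n cs (Suc k) a \<noteq> anc_lin n cs (Suc k) b \<and> anc_lin n cs k a = anc_lin n cs k b"

text \<open>E[1_k^(n) | Y_n]: fraction of the (n choose 2) unordered pairs of tips coalescing
  at the k-th speciation event.\<close>
definition coal_frac :: "nat \<Rightarrow> nat list \<Rightarrow> nat \<Rightarrow> real" where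
  "coal_frac n cs k =
     real (card {(a, b). a < b \<and> b < n \<and> coal_at n cs k a b}) / real (n choose 2)"

end

theory Submission
  imports Defs
begin

definition valid :: "nat list \<Rightarrow> bool" where
  "valid cs \<longleftrightarrow> (\<forall>j<length cs. cs ! j \<le> j)"

lemma yule_support: "cs \<in> set_pmf (yule_choices m) \<Longrightarrow> length cs = m \<and> valid cs"
proof (induction m arbitrary: cs)
  case 0
  then show ?case by (simp add: valid_def)
next
  case (Suc m)
  then obtain ds c where ds: "ds \<in> set_pmf (yule_choices m)" and c: "c < Suc m" and cs: "cs = ds @ [c]"
    by (auto simp: set_pmf_of_set)
  from Suc.IH[OF ds] have "length ds = m" "valid ds" by auto
  then show ?case using c cs by (auto simp: valid_def nth_append less_Suc_eq)
qed

lemma yule_finite: "finite (set_pmf (yule_choices m))"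
  by (induction m) (auto simp: set_pmf_of_set)

lemma E_step:
  "measure_pmf.expectation (yule_choices (Suc m)) (f :: nat list \<Rightarrow> real) =
   measure_pmf.expectation (yule_choices m) (\<lambda>cs. (\<Sum>c<Suc m. f (cs @ [c])) / real (Suc m))"
proof -
  have "measure_pmf.expectation (yule_choices (Suc m)) f =
     (\<Sum>a\<in>set_pmf (yule_choices m). pmf (yule_choices m) a *\<^sub>R
        measure_pmf.expectation (map_pmf (\<lambda>c. a @ [c]) (pmf_of_set {0..<Suc m})) f)"
    by (simp only: yule_choices.simps, rule pmf_expectation_bind)
       (auto simp: yule_finite set_pmf_of_set)
  also have "\<dots> = (\<Sum>a\<in>set_pmf (yule_choices m). pmf (yule_choices m) a *\<^sub>R
        ((\<Sum>c<Suc m. f (a @ [c])) / real (Suc m)))"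
    by (intro sum.cong refl, simp only: integral_map_pmf, subst integral_pmf_of_set) (auto simp: atLeast0LessThan)
  also have "\<dots> = measure_pmf.expectation (yule_choices m) (\<lambda>cs. (\<Sum>c<Suc m. f (cs @ [c])) / real (Suc m))"
    by (rule integral_measure_pmf[symmetric]) (auto simp: yule_finite)
  finally show ?thesis .
qed

lemma E_cong:
  assumes "\<And>cs. length cs = m \<Longrightarrow> valid cs \<Longrightarrow> f cs = g cs"
  shows "measure_pmf.expectation (yule_choices m) f = measure_pmf.expectation (yule_choices m) (g :: nat list \<Rightarrow> real)"
  by (rule integral_cong_AE) (auto intro!: AE_pmfI dest!: yule_support simp: assms)

lemma E_int: "integrable (measure_pmf (yule_choices m)) (f :: nat list \<Rightarrow> real)"
  by (rule integrable_measure_pmf_finite[OF yule_finite])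

lemma anc_prefix:
  assumes "1 \<le> m" "n \<le> length cs + 1"
  shows "anc_lin n (cs @ ds) m t = anc_lin n cs m t"
  unfolding anc_lin_def
proof (rule foldr_cong)
  fix a j assume "j \<in> set [m..<n]"
  then have "1 \<le> j" "j - 1 < length cs" using assms by auto
  then show "parent_lin (cs @ ds) j a = parent_lin cs j a"
    by (simp add: parent_lin_def nth_append)
qed auto

lemma anc_top: "m \<le> n \<Longrightarrow> anc_lin (Suc n) cs m t = anc_lin n cs m (parent_lin cs n t)"
  by (simp add: anc_lin_def)

lemma anc_split: "m1 \<le> m2 \<Longrightarrow> m2 \<le> n \<Longrightarrow> anc_lin n cs m1 t = anc_lin m2 cs m1 (anc_lin n cs m2 t)"
proof -
  assume a: "m1 \<le> m2" "m2 \<le> n"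
  have "[m1..<n] = [m1..<m2] @ [m2..<n]"
    using upt_add_eq_append[OF a(1), of "n - m2"] a by simp
  then show ?thesis by (simp add: anc_lin_def)
qed

lemma anc_bot: "k < n \<Longrightarrow> anc_lin n cs k t = parent_lin cs k (anc_lin n cs (Suc k) t)"
  by (simp add: anc_lin_def upt_conv_Cons)

lemma anc_id[simp]: "anc_lin m cs m t = t"
  by (simp add: anc_lin_def)

lemma anc_range:
  assumes "valid cs" "n \<le> length cs + 1" "1 \<le> m" "m \<le> n" "t < n"
  shows "anc_lin n cs m t < m"
  using assms
proof (induction n arbitrary: t)
  case 0
  then show ?case by simp
next
  case (Suc n)
  show ?case
  proof (cases "m = Suc n")
    case True
    then show ?thesis using Suc by simp
  next
    case False
    then have mn: "m \<le> n" using Suc by simp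
    have "parent_lin cs n t < n"
    proof (cases "t = n")
      case True
      have "n - 1 < length cs" "1 \<le> n" using Suc mn by auto
      then have "cs ! (n - 1) \<le> n - 1" using Suc.prems(1) by (simp add: valid_def)
      then show ?thesis using True \<open>1 \<le> n\<close> by (simp add: parent_lin_def)
    next
      case False
      then show ?thesis using Suc by (simp add: parent_lin_def)
    qed
    then show ?thesis using Suc.IH[of "parent_lin cs n t"] Suc.prems mn by (simp add: anc_top)
  qed
qed

lemma anc_app:
  assumes "length cs + 1 = n" "1 \<le> m" "m \<le> n"
  shows "anc_lin (Suc n) (cs @ [c]) m t = anc_lin n cs m (if t = n then c else t)"
proof -
  have pl: "parent_lin (cs @ [c]) n t = (if t = n then c else t)"
  proof -
    have "n - 1 = length cs" using assms by simp
    then show ?thesis by (simp add: parent_lin_def)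
  qed
  show ?thesis using assms by (simp add: anc_top pl anc_prefix)
qed

definition cnt :: "nat \<Rightarrow> nat list \<Rightarrow> nat \<Rightarrow> nat \<Rightarrow> nat" where
  "cnt n cs m i = card {t. t < n \<and> anc_lin n cs m t = i}"

lemma cnt_step:
  assumes "length cs + 1 = n" "1 \<le> m" "m \<le> n" "c < n"
  shows "cnt (Suc n) (cs @ [c]) m i = cnt n cs m i + (if anc_lin n cs m c = i then 1 else 0)"
proof -
  have pl: "parent_lin (cs @ [c]) n t = (if t = n then c else t)" for t
  proof -
    have "n - 1 = length cs" using assms by simp
    then show ?thesis by (simp add: parent_lin_def)
  qed
  have e: "anc_lin (Suc n) (cs @ [c]) m t = anc_lin n cs m (if t = n then c else t)" for t
    using assms by (simp add: anc_top pl anc_prefix)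
  note e = e
  have "{t. t < Suc n \<and> anc_lin (Suc n) (cs @ [c]) m t = i} =
        {t. t < n \<and> anc_lin n cs m t = i} \<union> (if anc_lin n cs m c = i then {n} else {})"
    by (auto simp: e less_Suc_eq)
  then show ?thesis by (simp add: cnt_def)
qed

lemma cnt_init: "i < m \<Longrightarrow> cnt m cs m i = 1"
proof -
  assume "i < m"
  then have "{t. t < m \<and> anc_lin m cs m t = i} = {i}" by auto
  then show ?thesis by (simp add: cnt_def)
qed

lemma coal_count:
  assumes v: "valid cs" and len: "length cs + 1 = n" and k: "1 \<le> k" "k < n"
  shows "card {(a, b). a < b \<and> b < n \<and> coal_at n cs k a b} =
         cnt n cs (Suc k) (cs ! (k - 1)) * cnt n cs (Suc k) k"
proof -
  define u where "u = anc_lin n cs (Suc k)"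
  define p where "p = cs ! (k - 1)"
  have pk: "p < k"
  proof -
    have "k - 1 < length cs" using len k by simp
    then have "p \<le> k - 1" using v by (simp add: valid_def p_def)
    then show ?thesis using k by simp
  qed
  have ur: "t < n \<Longrightarrow> u t < Suc k" for t
    unfolding u_def using anc_range[OF v, of n "Suc k" t] len k by auto
  have par: "parent_lin cs k x = (if x = k then p else x)" for x
    by (simp add: parent_lin_def p_def)
  have coal: "a < n \<Longrightarrow> b < n \<Longrightarrow> coal_at n cs k a b \<longleftrightarrow> (u a = p \<and> u b = k \<or> u a = k \<and> u b = p)" for a b
    using ur[of a] ur[of b] pk
    by (auto simp: coal_at_def anc_bot[OF k(2)] u_def[symmetric] par)
  define A where "A = {t. t < n \<and> u t = p}"
  define B where "B = {t. t < n \<and> u t = k}"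
  define S where "S = {(a, b). a < b \<and> b < n \<and> coal_at n cs k a b}"
  have S: "S = {(a, b). a < b \<and> b < n \<and> (u a = p \<and> u b = k \<or> u a = k \<and> u b = p)}"
    unfolding S_def using coal by auto
  have "bij_betw (\<lambda>(a, b). (min a b, max a b)) (A \<times> B) S"
    unfolding bij_betw_def
  proof
    show "inj_on (\<lambda>(a, b). (min a b, max a b)) (A \<times> B)"
    proof (rule inj_onI)
      fix x y assume hx: "x \<in> A \<times> B" and hy: "y \<in> A \<times> B"
        and he: "(case x of (a, b) \<Rightarrow> (min a b, max a b)) = (case y of (a, b) \<Rightarrow> (min a b, max a b))"
      obtain a b a' b' where xy: "x = (a, b)" "y = (a', b')" by (cases x, cases y) auto
      have h: "(a, b) \<in> A \<times> B" "(a', b') \<in> A \<times> B"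
        "(min a b, max a b) = (min a' b', max a' b')" using hx hy he xy by auto
      then have ua: "u a = p" "u b = k" "u a' = p" "u b' = k" by (auto simp: A_def B_def)
      have mm: "min a b = min a' b'" "max a b = max a' b'" using h(3) by auto
      have "a \<noteq> b'" "a' \<noteq> b" using ua pk by auto
      then have "a = a' \<and> b = b'" using mm
        by (cases "a < b"; cases "a' < b'") (auto simp: min_def max_def split: if_splits)
      then show "x = y" using xy by simp
    qed
    show "(\<lambda>(a, b). (min a b, max a b)) ` (A \<times> B) = S"
    proof
      show "(\<lambda>(a, b). (min a b, max a b)) ` (A \<times> B) \<subseteq> S"
      proof (clarify)
        fix a b assume h: "a \<in> A" "b \<in> B"
        then have "u a = p" "u b = k" "a < n" "b < n" by (auto simp: A_def B_def)
        then have "a \<noteq> b" using pk by auto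
        then show "(min a b, max a b) \<in> S" unfolding S
          using \<open>u a = p\<close> \<open>u b = k\<close> \<open>a < n\<close> \<open>b < n\<close>
          by (cases "a < b") (auto simp: min_def max_def)
      qed
      show "S \<subseteq> (\<lambda>(a, b). (min a b, max a b)) ` (A \<times> B)"
      proof
        fix x assume "x \<in> S"
        then obtain a b where x: "x = (a, b)" "a < b" "b < n" "u a = p \<and> u b = k \<or> u a = k \<and> u b = p"
          unfolding S by auto
        show "x \<in> (\<lambda>(a, b). (min a b, max a b)) ` (A \<times> B)"
        proof (cases "u a = p \<and> u b = k")
          case True
          then show ?thesis using x by (intro rev_image_eqI[of "(a, b)"]) (auto simp: A_def B_def)
        next
          case False
          then show ?thesis using x by (intro rev_image_eqI[of "(b, a)"]) (auto simp: A_def B_def)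
        qed
      qed
    qed
  qed
  then have "card S = card (A \<times> B)" by (rule bij_betw_same_card[symmetric])
  also have "\<dots> = card A * card B" by (rule card_cartesian_product)
  finally show ?thesis by (simp add: S_def A_def B_def cnt_def u_def p_def)
qed

lemma cnt_sum: "(\<Sum>c<n. of_bool (anc_lin n cs m c = i) :: real) = real (cnt n cs m i)"
proof -
  have "{..<n} \<inter> {c. anc_lin n cs m c = i} = {t. t < n \<and> anc_lin n cs m t = i}" by auto
  then show ?thesis by (simp add: sum_of_bool_eq cnt_def)
qed

lemma urn2:
  fixes P Q :: real
  assumes ex: "\<And>c. c < n \<Longrightarrow> \<not> (dP c \<and> dQ c)"
    and sP: "(\<Sum>c<n. of_bool (dP c) :: real) = P" and sQ: "(\<Sum>c<n. of_bool (dQ c) :: real) = Q"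
  shows "(\<Sum>c<n. (P + of_bool (dP c)) * (Q + of_bool (dQ c))) = (real n + 2) * (P * Q)"
proof -
  have "(\<Sum>c<n. (P + of_bool (dP c)) * (Q + of_bool (dQ c))) =
        (\<Sum>c<n. P * Q + Q * of_bool (dP c) + P * of_bool (dQ c))"
    using ex by (intro sum.cong refl) (auto simp: algebra_simps)
  also have "\<dots> = real n * (P * Q) + Q * P + P * Q"
    by (simp add: sum.distrib sum_distrib_left[symmetric] sP sQ)
  finally show ?thesis by (simp add: algebra_simps)
qed

lemma urn3:
  fixes a b Q :: real
  assumes ex: "\<And>c. c < n \<Longrightarrow> \<not> (da c \<and> db c) \<and> \<not> (da c \<and> dQ c) \<and> \<not> (db c \<and> dQ c)"
    and sa: "(\<Sum>c<n. of_bool (da c) :: real) = a" and sb: "(\<Sum>c<n. of_bool (db c) :: real) = b"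
    and sQ: "(\<Sum>c<n. of_bool (dQ c) :: real) = Q"
  shows "(\<Sum>c<n. (a + of_bool (da c)) * (b + of_bool (db c)) * (Q + of_bool (dQ c))) = (real n + 3) * (a * b * Q)"
proof -
  have "(\<Sum>c<n. (a + of_bool (da c)) * (b + of_bool (db c)) * (Q + of_bool (dQ c))) =
        (\<Sum>c<n. a * b * Q + (b * Q) * of_bool (da c) + (a * Q) * of_bool (db c) + (a * b) * of_bool (dQ c))"
  proof (intro sum.cong refl)
    fix c assume "c \<in> {..<n}"
    then show "(a + of_bool (da c)) * (b + of_bool (db c)) * (Q + of_bool (dQ c)) =
        a * b * Q + (b * Q) * of_bool (da c) + (a * Q) * of_bool (db c) + (a * b) * of_bool (dQ c)"
      using ex[of c] by (cases "da c"; cases "db c"; cases "dQ c") (auto simp: algebra_simps)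
  qed
  also have "\<dots> = real n * (a * b * Q) + (b * Q) * a + (a * Q) * b + (a * b) * Q"
    by (simp add: sum.distrib sum_distrib_left[symmetric] sa sb sQ)
  finally show ?thesis by (simp add: algebra_simps)
qed

lemma urn4:
  fixes a b P Q :: real
  assumes ex: "\<And>c. c < n \<Longrightarrow> \<not> (da c \<and> db c) \<and> \<not> (da c \<and> dQ c) \<and> \<not> (db c \<and> dQ c)
        \<and> \<not> (da c \<and> dP c) \<and> \<not> (db c \<and> dP c) \<and> \<not> (dP c \<and> dQ c)"
    and sa: "(\<Sum>c<n. of_bool (da c) :: real) = a" and sb: "(\<Sum>c<n. of_bool (db c) :: real) = b"
    and sP: "(\<Sum>c<n. of_bool (dP c) :: real) = P"
    and sQ: "(\<Sum>c<n. of_bool (dQ c) :: real) = Q"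
  shows "(\<Sum>c<n. (a + of_bool (da c)) * (b + of_bool (db c)) * (P + of_bool (dP c)) * (Q + of_bool (dQ c)))
     = (real n + 4) * (a * b * P * Q)"
proof -
  have "(\<Sum>c<n. (a + of_bool (da c)) * (b + of_bool (db c)) * (P + of_bool (dP c)) * (Q + of_bool (dQ c))) =
        (\<Sum>c<n. a * b * P * Q + (b * P * Q) * of_bool (da c) + (a * P * Q) * of_bool (db c)
            + (a * b * Q) * of_bool (dP c) + (a * b * P) * of_bool (dQ c))"
  proof (intro sum.cong refl)
    fix c assume "c \<in> {..<n}"
    then show "(a + of_bool (da c)) * (b + of_bool (db c)) * (P + of_bool (dP c)) * (Q + of_bool (dQ c)) =
        a * b * P * Q + (b * P * Q) * of_bool (da c) + (a * P * Q) * of_bool (db c)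
            + (a * b * Q) * of_bool (dP c) + (a * b * P) * of_bool (dQ c)"
      using ex[of c] by (cases "da c"; cases "db c"; cases "dP c"; cases "dQ c") (auto simp: algebra_simps)
  qed
  also have "\<dots> = real n * (a * b * P * Q) + (b * P * Q) * a + (a * P * Q) * b + (a * b * Q) * P + (a * b * P) * Q"
    by (simp add: sum.distrib sum_distrib_left[symmetric] sa sb sP sQ)
  finally show ?thesis by (simp add: algebra_simps)
qed

lemma urn4n:
  fixes a b P Q :: real
  assumes ex: "\<And>c. c < n \<Longrightarrow> \<not> (da c \<and> db c) \<and> (da c \<longrightarrow> dP c) \<and> (db c \<longrightarrow> dP c) \<and> \<not> (dP c \<and> dQ c)"
    and sa: "(\<Sum>c<n. of_bool (da c) :: real) = a" and sb: "(\<Sum>c<n. of_bool (db c) :: real) = b"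
    and sP: "(\<Sum>c<n. of_bool (dP c) :: real) = P"
    and sQ: "(\<Sum>c<n. of_bool (dQ c) :: real) = Q"
  shows "(\<Sum>c<n. (a + of_bool (da c)) * (b + of_bool (db c)) * (P + of_bool (dP c)) * (Q + of_bool (dQ c))
            + 2 * ((a + of_bool (da c)) * (b + of_bool (db c)) * (Q + of_bool (dQ c))))
     = (real n + 4) * (a * b * P * Q + 2 * (a * b * Q))"
proof -
  have "(\<Sum>c<n. (a + of_bool (da c)) * (b + of_bool (db c)) * (P + of_bool (dP c)) * (Q + of_bool (dQ c))
            + 2 * ((a + of_bool (da c)) * (b + of_bool (db c)) * (Q + of_bool (dQ c)))) =
        (\<Sum>c<n. (a * b * P * Q + 2 * (a * b * Q)) + (b * P * Q + 3 * b * Q) * of_bool (da c)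
            + (a * P * Q + 3 * a * Q) * of_bool (db c)
            + (a * b * Q) * of_bool (dP c) + (a * b * P + 2 * a * b) * of_bool (dQ c))"
  proof (intro sum.cong refl)
    fix c assume "c \<in> {..<n}"
    then show "(a + of_bool (da c)) * (b + of_bool (db c)) * (P + of_bool (dP c)) * (Q + of_bool (dQ c))
            + 2 * ((a + of_bool (da c)) * (b + of_bool (db c)) * (Q + of_bool (dQ c))) =
        (a * b * P * Q + 2 * (a * b * Q)) + (b * P * Q + 3 * b * Q) * of_bool (da c)
            + (a * P * Q + 3 * a * Q) * of_bool (db c)
            + (a * b * Q) * of_bool (dP c) + (a * b * P + 2 * a * b) * of_bool (dQ c)"
      using ex[of c] by (cases "da c"; cases "db c"; cases "dP c"; cases "dQ c") (auto simp: algebra_simps)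
  qed
  also have "\<dots> = real n * (a * b * P * Q + 2 * (a * b * Q)) + (b * P * Q + 3 * b * Q) * a
            + (a * P * Q + 3 * a * Q) * b + (a * b * Q) * P + (a * b * P + 2 * a * b) * Q"
    by (simp add: sum.distrib sum_distrib_left[symmetric] sa sb sP sQ)
  finally show ?thesis by (simp add: algebra_simps)
qed

lemma urn_base:
  fixes P Q :: real
  assumes ex: "\<And>c. c < n \<Longrightarrow> \<not> (dP c \<and> dQ c)"
    and sP: "(\<Sum>c<n. of_bool (dP c) :: real) = P" and sQ: "(\<Sum>c<n. of_bool (dQ c) :: real) = Q"
  shows "(\<Sum>c<n. of_bool (dP c) * (Q + of_bool (dQ c)) + of_bool (dQ c) * (P + of_bool (dP c))) = 2 * (P * Q)"
proof -
  have "(\<Sum>c<n. of_bool (dP c) * (Q + of_bool (dQ c)) + of_bool (dQ c) * (P + of_bool (dP c))) =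
        (\<Sum>c<n. Q * of_bool (dP c) + P * of_bool (dQ c))"
    using ex by (intro sum.cong refl) (auto simp: algebra_simps)
  also have "\<dots> = Q * P + P * Q"
    by (simp add: sum.distrib sum_distrib_left[symmetric] sP sQ)
  finally show ?thesis by (simp add: algebra_simps)
qed

definition Pf :: "nat \<Rightarrow> nat \<Rightarrow> nat list \<Rightarrow> real" where
  "Pf k1 n cs = real (cnt n cs (Suc k1) (cs ! (k1 - 1)))"
definition Qf :: "nat \<Rightarrow> nat \<Rightarrow> nat list \<Rightarrow> real" where
  "Qf k1 n cs = real (cnt n cs (Suc k1) k1)"

lemma valid_lt: "valid cs \<Longrightarrow> 1 \<le> k \<Longrightarrow> k \<le> length cs \<Longrightarrow> cs ! (k - 1) < k"
  unfolding valid_def by (metis One_nat_def Suc_le_eq Suc_pred diff_less le_imp_less_Suc less_one not_less)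

lemma stage1:
  assumes k1: "1 \<le> k1" and n: "Suc k1 \<le> n"
  shows "measure_pmf.expectation (yule_choices (n - 1)) (\<lambda>cs. Pf k1 n cs * Qf k1 n cs)
         = real n * (real n + 1) / ((real k1 + 1) * (real k1 + 2))"
  using n
proof (induction n rule: dec_induct)
  case base
  have "measure_pmf.expectation (yule_choices (Suc k1 - 1)) (\<lambda>cs. Pf k1 (Suc k1) cs * Qf k1 (Suc k1) cs)
      = measure_pmf.expectation (yule_choices (Suc k1 - 1)) (\<lambda>cs. 1)"
  proof (rule E_cong)
    fix cs :: "nat list" assume "length cs = Suc k1 - 1" "valid cs"
    then have "cs ! (k1 - 1) < k1" using valid_lt k1 by simp
    then show "Pf k1 (Suc k1) cs * Qf k1 (Suc k1) cs = 1"
      by (simp add: Pf_def Qf_def cnt_init)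
  qed
  also have "\<dots> = 1" by simp
  finally have e1: "measure_pmf.expectation (yule_choices (Suc k1 - 1)) (\<lambda>cs. Pf k1 (Suc k1) cs * Qf k1 (Suc k1) cs) = 1" .
  have h: "(real k1 + 1) * (real k1 + 2) \<noteq> 0" by (simp add: add_nonneg_eq_0_iff)
  have "real (Suc k1) * (real (Suc k1) + 1) / ((real k1 + 1) * (real k1 + 2)) = 1"
    using h by (simp add: add.commute)
  then show ?case using e1 by simp
next
  case (step n)
  have n1: "Suc (n - 1) = n" using step k1 by simp
  have "measure_pmf.expectation (yule_choices (Suc n - 1)) (\<lambda>cs. Pf k1 (Suc n) cs * Qf k1 (Suc n) cs)
     = measure_pmf.expectation (yule_choices (n - 1))
         (\<lambda>cs. (\<Sum>c<n. Pf k1 (Suc n) (cs @ [c]) * Qf k1 (Suc n) (cs @ [c])) / real n)"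
    using E_step[of "n - 1" "\<lambda>cs. Pf k1 (Suc n) cs * Qf k1 (Suc n) cs"] n1 by simp
  also have "\<dots> = measure_pmf.expectation (yule_choices (n - 1))
         (\<lambda>cs. (real n + 2) / real n * (Pf k1 n cs * Qf k1 n cs))"
  proof (rule E_cong)
    fix cs :: "nat list" assume len: "length cs = n - 1" and v: "valid cs"
    have lt: "cs ! (k1 - 1) < k1" using valid_lt[OF v k1] len step by simp
    have kl: "k1 - 1 < length cs" using len step k1 by linarith
    have nth: "(cs @ [c]) ! (k1 - 1) = cs ! (k1 - 1)" for c using kl by (simp add: nth_append)
    have l1: "length cs + 1 = n" using len step k1 by simp
    have "(\<Sum>c<n. Pf k1 (Suc n) (cs @ [c]) * Qf k1 (Suc n) (cs @ [c])) =
          (\<Sum>c<n. (Pf k1 n cs + of_bool (anc_lin n cs (Suc k1) c = cs ! (k1 - 1)))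
               * (Qf k1 n cs + of_bool (anc_lin n cs (Suc k1) c = k1)))"
    proof (intro sum.cong refl)
      fix c assume "c \<in> {..<n}"
      then have c: "c < n" by simp
      have "Pf k1 (Suc n) (cs @ [c]) = Pf k1 n cs + of_bool (anc_lin n cs (Suc k1) c = cs ! (k1 - 1))"
        unfolding Pf_def nth using cnt_step[OF l1 _ _ c, of "Suc k1"] step by simp
      moreover have "Qf k1 (Suc n) (cs @ [c]) = Qf k1 n cs + of_bool (anc_lin n cs (Suc k1) c = k1)"
        unfolding Qf_def using cnt_step[OF l1 _ _ c, of "Suc k1"] step by simp
      ultimately show "Pf k1 (Suc n) (cs @ [c]) * Qf k1 (Suc n) (cs @ [c]) =
          (Pf k1 n cs + of_bool (anc_lin n cs (Suc k1) c = cs ! (k1 - 1)))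
               * (Qf k1 n cs + of_bool (anc_lin n cs (Suc k1) c = k1))" by simp
    qed
    also have "\<dots> = (real n + 2) * (Pf k1 n cs * Qf k1 n cs)"
      by (rule urn2) (use lt in \<open>auto simp: cnt_sum Pf_def Qf_def\<close>)
    finally show "(\<Sum>c<n. Pf k1 (Suc n) (cs @ [c]) * Qf k1 (Suc n) (cs @ [c])) / real n =
        (real n + 2) / real n * (Pf k1 n cs * Qf k1 n cs)" by simp
  qed
  also have "\<dots> = (real n + 2) / real n * (real n * (real n + 1) / ((real k1 + 1) * (real k1 + 2)))"
    using step.IH by simp
  also have "\<dots> = real (Suc n) * (real (Suc n) + 1) / ((real k1 + 1) * (real k1 + 2))"
  proof -
    have np: "real n > 0" using step k1 by simp
    have "\<And>d::real. (real n + 2) / real n * (real n * (real n + 1) / d) = real (Suc n) * (real (Suc n) + 1) / d"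
    proof -
      fix d :: real
      show "(real n + 2) / real n * (real n * (real n + 1) / d) = real (Suc n) * (real (Suc n) + 1) / d"
        using np by (cases "d = 0") (simp_all add: field_simps)
    qed
    then show ?thesis by blast
  qed
  finally show ?case .
qed

definition Af :: "nat \<Rightarrow> nat \<Rightarrow> nat list \<Rightarrow> real" where
  "Af k2 n cs = real (cnt n cs (Suc k2) (cs ! (k2 - 1)))"
definition Bf :: "nat \<Rightarrow> nat \<Rightarrow> nat list \<Rightarrow> real" where
  "Bf k2 n cs = real (cnt n cs (Suc k2) k2)"
definition IPf :: "nat \<Rightarrow> nat \<Rightarrow> nat list \<Rightarrow> real" where
  "IPf k1 k2 cs = of_bool (anc_lin (Suc k2) cs (Suc k1) (cs ! (k2 - 1)) = cs ! (k1 - 1))"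
definition IQf :: "nat \<Rightarrow> nat \<Rightarrow> nat list \<Rightarrow> real" where
  "IQf k1 k2 cs = of_bool (anc_lin (Suc k2) cs (Suc k1) (cs ! (k2 - 1)) = k1)"
definition M3 :: "nat \<Rightarrow> nat \<Rightarrow> nat \<Rightarrow> nat list \<Rightarrow> real" where
  "M3 k1 k2 n cs = Af k2 n cs * Bf k2 n cs * (IPf k1 k2 cs * Qf k1 n cs + IQf k1 k2 cs * Pf k1 n cs)"
definition M4 :: "nat \<Rightarrow> nat \<Rightarrow> nat \<Rightarrow> nat list \<Rightarrow> real" where
  "M4 k1 k2 n cs = Af k2 n cs * Bf k2 n cs * Pf k1 n cs * Qf k1 n cs + 2 * M3 k1 k2 n cs"

lemma base_sums:
  assumes k: "1 \<le> k1" "k1 < k2" and len: "length cs = k2 - 1" and v: "valid cs"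
  shows "(\<Sum>c<k2. M4 k1 k2 (Suc k2) (cs @ [c])) = (real k2 + 6) * (Pf k1 k2 cs * Qf k1 k2 cs)"
    and "(\<Sum>c<k2. M3 k1 k2 (Suc k2) (cs @ [c])) = 2 * (Pf k1 k2 cs * Qf k1 k2 cs)"
proof -
  have l1: "length cs + 1 = k2" using len k by simp
  have kl: "k1 - 1 < length cs" using len k by linarith
  have lt: "cs ! (k1 - 1) < k1" using valid_lt[OF v k(1)] kl by simp
  define P where "P = Pf k1 k2 cs"
  define Q where "Q = Qf k1 k2 cs"
  define dP where "dP c = (anc_lin k2 cs (Suc k1) c = cs ! (k1 - 1))" for c
  define dQ where "dQ c = (anc_lin k2 cs (Suc k1) c = k1)" for c
  have ex: "\<And>c. c < k2 \<Longrightarrow> \<not> (dP c \<and> dQ c)" using lt by (auto simp: dP_def dQ_def)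
  have sP: "(\<Sum>c<k2. of_bool (dP c) :: real) = P" by (simp add: dP_def P_def Pf_def cnt_sum)
  have sQ: "(\<Sum>c<k2. of_bool (dQ c) :: real) = Q" by (simp add: dQ_def Q_def Qf_def cnt_sum)
  have comp: "Af k2 (Suc k2) (cs @ [c]) = 1 \<and> Bf k2 (Suc k2) (cs @ [c]) = 1 \<and>
      Pf k1 (Suc k2) (cs @ [c]) = P + of_bool (dP c) \<and> Qf k1 (Suc k2) (cs @ [c]) = Q + of_bool (dQ c) \<and>
      IPf k1 k2 (cs @ [c]) = of_bool (dP c) \<and> IQf k1 k2 (cs @ [c]) = of_bool (dQ c)" if c: "c < k2" for c
  proof -
    have nx: "(cs @ [c]) ! (k2 - 1) = c" using len k by (simp add: nth_append)
    have n1: "(cs @ [c]) ! (k1 - 1) = cs ! (k1 - 1)" using kl by (simp add: nth_append)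
    have an: "anc_lin (Suc k2) (cs @ [c]) (Suc k1) c = anc_lin k2 cs (Suc k1) c"
      using anc_app[OF l1, of "Suc k1" c c] k c by simp
    have A: "Af k2 (Suc k2) (cs @ [c]) = 1" unfolding Af_def nx using c by (simp add: cnt_init)
    have B: "Bf k2 (Suc k2) (cs @ [c]) = 1" unfolding Bf_def by (simp add: cnt_init)
    have Pn: "Pf k1 (Suc k2) (cs @ [c]) = P + of_bool (dP c)"
      unfolding Pf_def n1 P_def dP_def using cnt_step[OF l1 _ _ c, of "Suc k1"] k by (simp add: Pf_def)
    have Qn: "Qf k1 (Suc k2) (cs @ [c]) = Q + of_bool (dQ c)"
      unfolding Qf_def Q_def dQ_def using cnt_step[OF l1 _ _ c, of "Suc k1"] k by (simp add: Qf_def)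
    have IP: "IPf k1 k2 (cs @ [c]) = of_bool (dP c)" unfolding IPf_def nx n1 an dP_def ..
    have IQ: "IQf k1 k2 (cs @ [c]) = of_bool (dQ c)" unfolding IQf_def nx an dQ_def ..
    show ?thesis using A B Pn Qn IP IQ by simp
  qed
  have "(\<Sum>c<k2. M4 k1 k2 (Suc k2) (cs @ [c])) =
     (\<Sum>c<k2. (P + of_bool (dP c)) * (Q + of_bool (dQ c)) +
        2 * (of_bool (dP c) * (Q + of_bool (dQ c)) + of_bool (dQ c) * (P + of_bool (dP c))))"
    by (intro sum.cong refl) (simp add: M4_def M3_def comp)
  also have "\<dots> = (\<Sum>c<k2. (P + of_bool (dP c)) * (Q + of_bool (dQ c))) +
        2 * (\<Sum>c<k2. of_bool (dP c) * (Q + of_bool (dQ c)) + of_bool (dQ c) * (P + of_bool (dP c)))"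
    by (subst sum.distrib) (simp only: sum_distrib_left)
  also have "\<dots> = (real k2 + 2) * (P * Q) + 2 * (2 * (P * Q))"
    by (simp only: urn2[OF ex sP sQ] urn_base[OF ex sP sQ])
  finally show "(\<Sum>c<k2. M4 k1 k2 (Suc k2) (cs @ [c])) = (real k2 + 6) * (Pf k1 k2 cs * Qf k1 k2 cs)"
    by (simp add: P_def Q_def algebra_simps)
  have "(\<Sum>c<k2. M3 k1 k2 (Suc k2) (cs @ [c])) =
     (\<Sum>c<k2. of_bool (dP c) * (Q + of_bool (dQ c)) + of_bool (dQ c) * (P + of_bool (dP c)))"
    by (intro sum.cong refl) (simp add: M3_def comp)
  also have "\<dots> = 2 * (P * Q)" by (rule urn_base[OF ex sP sQ])
  finally show "(\<Sum>c<k2. M3 k1 k2 (Suc k2) (cs @ [c])) = 2 * (Pf k1 k2 cs * Qf k1 k2 cs)"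
    by (simp add: P_def Q_def)
qed

lemma step_sums:
  assumes k: "1 \<le> k1" "k1 < k2" and n: "Suc k2 \<le> n" and len: "length cs = n - 1" and v: "valid cs"
  shows "(\<Sum>c<n. M4 k1 k2 (Suc n) (cs @ [c])) = (real n + 4) * M4 k1 k2 n cs"
    and "(\<Sum>c<n. M3 k1 k2 (Suc n) (cs @ [c])) = (real n + 3) * M3 k1 k2 n cs"
proof -
  have l1: "length cs + 1 = n" using len n by simp
  have kl: "k1 - 1 < length cs" using len k n by linarith
  have kl2: "k2 - 1 < length cs" using len k n by linarith
  have lt: "cs ! (k1 - 1) < k1" using valid_lt[OF v k(1)] kl by simp
  have lt2: "cs ! (k2 - 1) < k2" using valid_lt[OF v] kl2 k by simp
  define x where "x = cs ! (k2 - 1)"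
  define c1 where "c1 = cs ! (k1 - 1)"
  define z where "z = anc_lin (Suc k2) cs (Suc k1) x"
  define A where "A = Af k2 n cs"
  define B where "B = Bf k2 n cs"
  define P where "P = Pf k1 n cs"
  define Q where "Q = Qf k1 n cs"
  define da where "da c = (anc_lin n cs (Suc k2) c = x)" for c
  define db where "db c = (anc_lin n cs (Suc k2) c = k2)" for c
  define dP where "dP c = (anc_lin n cs (Suc k1) c = c1)" for c
  define dQ where "dQ c = (anc_lin n cs (Suc k1) c = k1)" for c
  have c1k1: "c1 \<noteq> k1" using lt c1_def by simp
  have xk2: "x \<noteq> k2" using lt2 x_def by simp
  have zb: "anc_lin (Suc k2) cs (Suc k1) k2 = z"
  proof -
    have "anc_lin (Suc k2) cs (Suc k1) k2 = anc_lin k2 cs (Suc k1) x"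
      using k by (simp add: anc_top parent_lin_def x_def)
    moreover have "z = anc_lin k2 cs (Suc k1) x"
      unfolding z_def using k xk2 by (simp add: anc_top parent_lin_def)
    ultimately show ?thesis by simp
  qed
  have sp: "anc_lin n cs (Suc k1) c = anc_lin (Suc k2) cs (Suc k1) (anc_lin n cs (Suc k2) c)" for c
    using anc_split[of "Suc k1" "Suc k2" n cs c] k n by simp
  have daP: "da c \<Longrightarrow> anc_lin n cs (Suc k1) c = z" for c using sp[of c] by (simp add: da_def z_def)
  have dbP: "db c \<Longrightarrow> anc_lin n cs (Suc k1) c = z" for c using sp[of c] zb by (simp add: db_def)
  have sa: "(\<Sum>c<n. of_bool (da c) :: real) = A" by (simp add: da_def A_def Af_def cnt_sum x_def)
  have sb: "(\<Sum>c<n. of_bool (db c) :: real) = B" by (simp add: db_def B_def Bf_def cnt_sum)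
  have sP: "(\<Sum>c<n. of_bool (dP c) :: real) = P" by (simp add: dP_def P_def Pf_def cnt_sum c1_def)
  have sQ: "(\<Sum>c<n. of_bool (dQ c) :: real) = Q" by (simp add: dQ_def Q_def Qf_def cnt_sum)
  have exab: "\<not> (da c \<and> db c)" for c using xk2 by (auto simp: da_def db_def)
  have exPQ: "\<not> (dP c \<and> dQ c)" for c using c1k1 by (auto simp: dP_def dQ_def)
  have IP: "IPf k1 k2 cs = of_bool (z = c1)" by (simp add: IPf_def z_def x_def c1_def)
  have IQ: "IQf k1 k2 cs = of_bool (z = k1)" by (simp add: IQf_def z_def x_def)
  have comp: "Af k2 (Suc n) (cs @ [c]) = A + of_bool (da c) \<and> Bf k2 (Suc n) (cs @ [c]) = B + of_bool (db c) \<and>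
      Pf k1 (Suc n) (cs @ [c]) = P + of_bool (dP c) \<and> Qf k1 (Suc n) (cs @ [c]) = Q + of_bool (dQ c) \<and>
      IPf k1 k2 (cs @ [c]) = IPf k1 k2 cs \<and> IQf k1 k2 (cs @ [c]) = IQf k1 k2 cs" if c: "c < n" for c
  proof -
    have n1: "(cs @ [c]) ! (k1 - 1) = c1" using kl by (simp add: nth_append c1_def)
    have n2: "(cs @ [c]) ! (k2 - 1) = x" using kl2 by (simp add: nth_append x_def)
    have ap: "anc_lin (Suc k2) (cs @ [c]) (Suc k1) t = anc_lin (Suc k2) cs (Suc k1) t" for t
      using anc_prefix[of "Suc k1" "Suc k2" cs "[c]" t] n len by simp
    have An: "Af k2 (Suc n) (cs @ [c]) = A + of_bool (da c)"
      unfolding Af_def n2 A_def da_def using cnt_step[OF l1 _ _ c, of "Suc k2"] n by (simp add: Af_def x_def)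
    have Bn: "Bf k2 (Suc n) (cs @ [c]) = B + of_bool (db c)"
      unfolding Bf_def B_def db_def using cnt_step[OF l1 _ _ c, of "Suc k2"] n by (simp add: Bf_def)
    have Pn: "Pf k1 (Suc n) (cs @ [c]) = P + of_bool (dP c)"
      unfolding Pf_def n1 P_def dP_def using cnt_step[OF l1 _ _ c, of "Suc k1"] k n by (simp add: Pf_def c1_def)
    have Qn: "Qf k1 (Suc n) (cs @ [c]) = Q + of_bool (dQ c)"
      unfolding Qf_def Q_def dQ_def using cnt_step[OF l1 _ _ c, of "Suc k1"] k n by (simp add: Qf_def)
    have IPn: "IPf k1 k2 (cs @ [c]) = IPf k1 k2 cs" unfolding IPf_def n1 n2 ap by (simp add: x_def c1_def)
    have IQn: "IQf k1 k2 (cs @ [c]) = IQf k1 k2 cs" unfolding IQf_def n2 ap by (simp add: x_def)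
    show ?thesis using An Bn Pn Qn IPn IQn by simp
  qed
  have M4e: "(\<Sum>c<n. M4 k1 k2 (Suc n) (cs @ [c])) =
     (\<Sum>c<n. (A + of_bool (da c)) * (B + of_bool (db c)) * (P + of_bool (dP c)) * (Q + of_bool (dQ c)) +
        2 * ((A + of_bool (da c)) * (B + of_bool (db c)) *
          (IPf k1 k2 cs * (Q + of_bool (dQ c)) + IQf k1 k2 cs * (P + of_bool (dP c)))))"
    by (intro sum.cong refl) (simp add: M4_def M3_def comp)
  have M3e: "(\<Sum>c<n. M3 k1 k2 (Suc n) (cs @ [c])) =
     (\<Sum>c<n. (A + of_bool (da c)) * (B + of_bool (db c)) *
          (IPf k1 k2 cs * (Q + of_bool (dQ c)) + IQf k1 k2 cs * (P + of_bool (dP c))))"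
    by (intro sum.cong refl) (simp add: M3_def comp)
  have M4o: "M4 k1 k2 n cs = A * B * P * Q + 2 * (A * B * (IPf k1 k2 cs * Q + IQf k1 k2 cs * P))"
    by (simp add: M4_def M3_def A_def B_def P_def Q_def)
  have M3o: "M3 k1 k2 n cs = A * B * (IPf k1 k2 cs * Q + IQf k1 k2 cs * P)"
    by (simp add: M3_def A_def B_def P_def Q_def)
  have "(\<Sum>c<n. M4 k1 k2 (Suc n) (cs @ [c])) = (real n + 4) * M4 k1 k2 n cs \<and>
        (\<Sum>c<n. M3 k1 k2 (Suc n) (cs @ [c])) = (real n + 3) * M3 k1 k2 n cs"
  proof (cases "z = c1")
    case True
    then have zk: "z \<noteq> k1" using c1k1 by simp
    have ex: "\<And>c. c < n \<Longrightarrow> \<not> (da c \<and> db c) \<and> (da c \<longrightarrow> dP c) \<and> (db c \<longrightarrow> dP c) \<and> \<not> (dP c \<and> dQ c)"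
      using exab exPQ daP dbP True by (auto simp: dP_def)
    have ex3: "\<And>c. c < n \<Longrightarrow> \<not> (da c \<and> db c) \<and> \<not> (da c \<and> dQ c) \<and> \<not> (db c \<and> dQ c)"
      using ex exPQ by blast
    have "(\<Sum>c<n. M4 k1 k2 (Suc n) (cs @ [c])) = (\<Sum>c<n. (A + of_bool (da c)) * (B + of_bool (db c)) * (P + of_bool (dP c)) * (Q + of_bool (dQ c))
            + 2 * ((A + of_bool (da c)) * (B + of_bool (db c)) * (Q + of_bool (dQ c))))"
      unfolding M4e IP IQ using True zk by simp
    also have "\<dots> = (real n + 4) * (A * B * P * Q + 2 * (A * B * Q))" by (rule urn4n[OF ex sa sb sP sQ])
    finally have r4: "(\<Sum>c<n. M4 k1 k2 (Suc n) (cs @ [c])) = (real n + 4) * M4 k1 k2 n cs"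
      unfolding M4o IP IQ using True zk by simp
    have "(\<Sum>c<n. M3 k1 k2 (Suc n) (cs @ [c])) = (\<Sum>c<n. (A + of_bool (da c)) * (B + of_bool (db c)) * (Q + of_bool (dQ c)))"
      unfolding M3e IP IQ using True zk by simp
    also have "\<dots> = (real n + 3) * (A * B * Q)" by (rule urn3[OF ex3 sa sb sQ])
    finally have r3: "(\<Sum>c<n. M3 k1 k2 (Suc n) (cs @ [c])) = (real n + 3) * M3 k1 k2 n cs"
      unfolding M3o IP IQ using True zk by simp
    show ?thesis using r3 r4 by simp
  next
    case F1: False
    show ?thesis
    proof (cases "z = k1")
      case True
      have ex: "\<And>c. c < n \<Longrightarrow> \<not> (da c \<and> db c) \<and> (da c \<longrightarrow> dQ c) \<and> (db c \<longrightarrow> dQ c) \<and> \<not> (dQ c \<and> dP c)"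
        using exab exPQ daP dbP True by (auto simp: dQ_def)
      have ex3: "\<And>c. c < n \<Longrightarrow> \<not> (da c \<and> db c) \<and> \<not> (da c \<and> dP c) \<and> \<not> (db c \<and> dP c)"
        using ex exPQ by blast
      have "(\<Sum>c<n. M4 k1 k2 (Suc n) (cs @ [c])) = (\<Sum>c<n. (A + of_bool (da c)) * (B + of_bool (db c)) * (Q + of_bool (dQ c)) * (P + of_bool (dP c))
              + 2 * ((A + of_bool (da c)) * (B + of_bool (db c)) * (P + of_bool (dP c))))"
        unfolding M4e IP IQ using True F1 by (simp add: algebra_simps)
      also have "\<dots> = (real n + 4) * (A * B * Q * P + 2 * (A * B * P))" by (rule urn4n[OF ex sa sb sQ sP])
      finally have r4: "(\<Sum>c<n. M4 k1 k2 (Suc n) (cs @ [c])) = (real n + 4) * M4 k1 k2 n cs"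
        unfolding M4o IP IQ using True F1 by (simp add: algebra_simps)
      have "(\<Sum>c<n. M3 k1 k2 (Suc n) (cs @ [c])) = (\<Sum>c<n. (A + of_bool (da c)) * (B + of_bool (db c)) * (P + of_bool (dP c)))"
        unfolding M3e IP IQ using True F1 by simp
      also have "\<dots> = (real n + 3) * (A * B * P)" by (rule urn3[OF ex3 sa sb sP])
      finally have r3: "(\<Sum>c<n. M3 k1 k2 (Suc n) (cs @ [c])) = (real n + 3) * M3 k1 k2 n cs"
        unfolding M3o IP IQ using True F1 by simp
      show ?thesis using r3 r4 by simp
    next
      case F2: False
      have ex: "\<And>c. c < n \<Longrightarrow> \<not> (da c \<and> db c) \<and> \<not> (da c \<and> dQ c) \<and> \<not> (db c \<and> dQ c)
        \<and> \<not> (da c \<and> dP c) \<and> \<not> (db c \<and> dP c) \<and> \<not> (dP c \<and> dQ c)"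
        using exab exPQ daP dbP F1 F2 by (auto simp: dP_def dQ_def)
      have "(\<Sum>c<n. M4 k1 k2 (Suc n) (cs @ [c])) = (\<Sum>c<n. (A + of_bool (da c)) * (B + of_bool (db c)) * (P + of_bool (dP c)) * (Q + of_bool (dQ c)))"
        unfolding M4e IP IQ using F1 F2 by simp
      also have "\<dots> = (real n + 4) * (A * B * P * Q)" by (rule urn4[OF ex sa sb sP sQ])
      finally have r4: "(\<Sum>c<n. M4 k1 k2 (Suc n) (cs @ [c])) = (real n + 4) * M4 k1 k2 n cs"
        unfolding M4o IP IQ using F1 F2 by simp
      have r3: "(\<Sum>c<n. M3 k1 k2 (Suc n) (cs @ [c])) = (real n + 3) * M3 k1 k2 n cs"
        unfolding M3e M3o IP IQ using F1 F2 by simp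
      show ?thesis using r3 r4 by simp
    qed
  qed
  then show "(\<Sum>c<n. M4 k1 k2 (Suc n) (cs @ [c])) = (real n + 4) * M4 k1 k2 n cs"
    and "(\<Sum>c<n. M3 k1 k2 (Suc n) (cs @ [c])) = (real n + 3) * M3 k1 k2 n cs" by auto
qed

lemma alg:
  fixes N a b :: real
  assumes "N > 1" "a \<ge> 0" "b \<ge> 0"
  shows "((b + 6) * (b + 1) / ((a + 1) * (a + 2)) * (N * (N + 1) * (N + 2) * (N + 3)) / ((b + 1) * (b + 2) * (b + 3) * (b + 4))
     - 2 * (2 * (b + 1) / ((a + 1) * (a + 2)) * (N * (N + 1) * (N + 2)) / ((b + 1) * (b + 2) * (b + 3))))
     / ((N * (N - 1) / 2) * (N * (N - 1) / 2))
   = 4 * (N + 1)^2 / ((N - 1)^2 * (a + 1) * (a + 2) * (b + 1) * (b + 2))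
     - 8 * (N + 1) * (3 * N - (b - 2)) * (N - (b + 1)) /
       (N * (N - 1)^2 * (a + 1) * (a + 2) * (b + 1) * (b + 2) * (b + 3) * (b + 4))"
proof -
  have p: "N > 0" "N - 1 > 0" "a + 1 > 0" "a + 2 > 0" "b + 1 > 0" "b + 2 > 0" "b + 3 > 0" "b + 4 > 0"
    using assms by auto
  show ?thesis using p
    apply (simp add: divide_simps power2_eq_square)
    apply algebra
    done
qed
lemma choose2: "real (n choose 2) = real n * (real n - 1) / 2"
  by (induction n) (simp_all add: field_simps numeral_2_eq_2)

lemma stage2:
  assumes k: "1 \<le> k1" "k1 < k2" and n: "Suc k2 \<le> n"
  shows "measure_pmf.expectation (yule_choices (n - 1)) (M4 k1 k2 n) =
           measure_pmf.expectation (yule_choices k2) (M4 k1 k2 (Suc k2)) *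
           (real n * (real n + 1) * (real n + 2) * (real n + 3)) /
           ((real k2 + 1) * (real k2 + 2) * (real k2 + 3) * (real k2 + 4))
      \<and> measure_pmf.expectation (yule_choices (n - 1)) (M3 k1 k2 n) =
           measure_pmf.expectation (yule_choices k2) (M3 k1 k2 (Suc k2)) *
           (real n * (real n + 1) * (real n + 2)) /
           ((real k2 + 1) * (real k2 + 2) * (real k2 + 3))"
  using n
proof (induction n rule: dec_induct)
  case base
  have h4: "(real k2 + 1) * (real k2 + 2) * (real k2 + 3) * (real k2 + 4) \<noteq> 0" by (simp add: add_nonneg_eq_0_iff)
  have h3: "(real k2 + 1) * (real k2 + 2) * (real k2 + 3) \<noteq> 0" by (simp add: add_nonneg_eq_0_iff)
  show ?case using h4 h3 by (simp add: add.commute add.left_commute)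
next
  case (step m)
  have m1: "Suc (m - 1) = m" using step k by simp
  have mp: "real m > 0" using step k by simp
  have E4: "measure_pmf.expectation (yule_choices (Suc m - 1)) (M4 k1 k2 (Suc m))
     = (real m + 4) / real m * measure_pmf.expectation (yule_choices (m - 1)) (M4 k1 k2 m)"
  proof -
    have "measure_pmf.expectation (yule_choices (Suc m - 1)) (M4 k1 k2 (Suc m))
      = measure_pmf.expectation (yule_choices (m - 1)) (\<lambda>cs. (\<Sum>c<m. M4 k1 k2 (Suc m) (cs @ [c])) / real m)"
      using E_step[of "m - 1" "M4 k1 k2 (Suc m)"] m1 by simp
    also have "\<dots> = measure_pmf.expectation (yule_choices (m - 1)) (\<lambda>cs. (real m + 4) / real m * M4 k1 k2 m cs)"
      by (rule E_cong) (use step_sums(1)[OF k step(1)] in simp)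
    finally show ?thesis by simp
  qed
  have E3: "measure_pmf.expectation (yule_choices (Suc m - 1)) (M3 k1 k2 (Suc m))
     = (real m + 3) / real m * measure_pmf.expectation (yule_choices (m - 1)) (M3 k1 k2 m)"
  proof -
    have "measure_pmf.expectation (yule_choices (Suc m - 1)) (M3 k1 k2 (Suc m))
      = measure_pmf.expectation (yule_choices (m - 1)) (\<lambda>cs. (\<Sum>c<m. M3 k1 k2 (Suc m) (cs @ [c])) / real m)"
      using E_step[of "m - 1" "M3 k1 k2 (Suc m)"] m1 by simp
    also have "\<dots> = measure_pmf.expectation (yule_choices (m - 1)) (\<lambda>cs. (real m + 3) / real m * M3 k1 k2 m cs)"
      by (rule E_cong) (use step_sums(2)[OF k step(1)] in simp)
    finally show ?thesis by simp
  qed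
  have g4: "(real m + 4) / real m * (X * (real m * (real m + 1) * (real m + 2) * (real m + 3)) / d)
     = X * (real (Suc m) * (real (Suc m) + 1) * (real (Suc m) + 2) * (real (Suc m) + 3)) / d" for X d :: real
    using mp by (cases "d = 0") (simp_all add: field_simps)
  have g3: "(real m + 3) / real m * (X * (real m * (real m + 1) * (real m + 2)) / d)
     = X * (real (Suc m) * (real (Suc m) + 1) * (real (Suc m) + 2)) / d" for X d :: real
    using mp by (cases "d = 0") (simp_all add: field_simps)
  show ?case
  proof
    show "measure_pmf.expectation (yule_choices (Suc m - 1)) (M4 k1 k2 (Suc m)) =
           measure_pmf.expectation (yule_choices k2) (M4 k1 k2 (Suc k2)) *
           (real (Suc m) * (real (Suc m) + 1) * (real (Suc m) + 2) * (real (Suc m) + 3)) /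
           ((real k2 + 1) * (real k2 + 2) * (real k2 + 3) * (real k2 + 4))"
      unfolding E4 conjunct1[OF step(3)] by (rule g4)
    show "measure_pmf.expectation (yule_choices (Suc m - 1)) (M3 k1 k2 (Suc m)) =
           measure_pmf.expectation (yule_choices k2) (M3 k1 k2 (Suc k2)) *
           (real (Suc m) * (real (Suc m) + 1) * (real (Suc m) + 2)) /
           ((real k2 + 1) * (real k2 + 2) * (real k2 + 3))"
      unfolding E3 conjunct2[OF step(3)] by (rule g3)
  qed
qed

lemma base_vals:
  assumes k: "1 \<le> k1" "k1 < k2"
  shows "measure_pmf.expectation (yule_choices k2) (M4 k1 k2 (Suc k2)) =
           (real k2 + 6) * (real k2 + 1) / ((real k1 + 1) * (real k1 + 2))"
    and "measure_pmf.expectation (yule_choices k2) (M3 k1 k2 (Suc k2)) =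
           2 * (real k2 + 1) / ((real k1 + 1) * (real k1 + 2))"
proof -
  have m1: "Suc (k2 - 1) = k2" using k by simp
  have kp: "real k2 > 0" using k by simp
  have S1: "measure_pmf.expectation (yule_choices (k2 - 1)) (\<lambda>cs. Pf k1 k2 cs * Qf k1 k2 cs)
     = real k2 * (real k2 + 1) / ((real k1 + 1) * (real k1 + 2))"
    using stage1[OF k(1), of k2] k by simp
  have "measure_pmf.expectation (yule_choices k2) (M4 k1 k2 (Suc k2))
      = measure_pmf.expectation (yule_choices (k2 - 1)) (\<lambda>cs. (\<Sum>c<k2. M4 k1 k2 (Suc k2) (cs @ [c])) / real k2)"
    using E_step[of "k2 - 1" "M4 k1 k2 (Suc k2)"] m1 by simp
  also have "\<dots> = measure_pmf.expectation (yule_choices (k2 - 1)) (\<lambda>cs. (real k2 + 6) / real k2 * (Pf k1 k2 cs * Qf k1 k2 cs))"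
    by (rule E_cong) (use base_sums(1)[OF k] in simp)
  also have "\<dots> = (real k2 + 6) / real k2 * (real k2 * (real k2 + 1) / ((real k1 + 1) * (real k1 + 2)))"
    using S1 by simp
  also have "\<dots> = (real k2 + 6) * (real k2 + 1) / ((real k1 + 1) * (real k1 + 2))"
    using kp by simp
  finally show "measure_pmf.expectation (yule_choices k2) (M4 k1 k2 (Suc k2)) =
           (real k2 + 6) * (real k2 + 1) / ((real k1 + 1) * (real k1 + 2))" .
  have "measure_pmf.expectation (yule_choices k2) (M3 k1 k2 (Suc k2))
      = measure_pmf.expectation (yule_choices (k2 - 1)) (\<lambda>cs. (\<Sum>c<k2. M3 k1 k2 (Suc k2) (cs @ [c])) / real k2)"
    using E_step[of "k2 - 1" "M3 k1 k2 (Suc k2)"] m1 by simp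
  also have "\<dots> = measure_pmf.expectation (yule_choices (k2 - 1)) (\<lambda>cs. 2 / real k2 * (Pf k1 k2 cs * Qf k1 k2 cs))"
    by (rule E_cong) (use base_sums(2)[OF k] in simp)
  also have "\<dots> = 2 / real k2 * (real k2 * (real k2 + 1) / ((real k1 + 1) * (real k1 + 2)))"
    using S1 by simp
  also have "\<dots> = 2 * (real k2 + 1) / ((real k1 + 1) * (real k1 + 2))"
    using kp by simp
  finally show "measure_pmf.expectation (yule_choices k2) (M3 k1 k2 (Suc k2)) =
           2 * (real k2 + 1) / ((real k1 + 1) * (real k1 + 2))" .
qed

theorem mainTheorem18:
  fixes n k1 k2 :: nat
  assumes "n \<ge> 3" and "1 \<le> k1" and "k1 < k2" and "k2 \<le> n - 1"
  shows "measure_pmf.expectation (yule_choices (n - 1))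
           (\<lambda>cs. coal_frac n cs k2 * coal_frac n cs k1)
       = 4 * (real n + 1)^2 /
           ((real n - 1)^2 * (real k1 + 1) * (real k1 + 2) * (real k2 + 1) * (real k2 + 2))
         - 8 * (real n + 1) * (3 * real n - (real k2 - 2)) * (real n - (real k2 + 1)) /
           (real n * (real n - 1)^2 * (real k1 + 1) * (real k1 + 2) * (real k2 + 1)
            * (real k2 + 2) * (real k2 + 3) * (real k2 + 4))"
proof -
  have k: "1 \<le> k1" "k1 < k2" using assms by auto
  have k2n: "Suc k2 \<le> n" using assms by simp
  define C where "C = real (n choose 2)"
  have "measure_pmf.expectation (yule_choices (n - 1)) (\<lambda>cs. coal_frac n cs k2 * coal_frac n cs k1)
      = measure_pmf.expectation (yule_choices (n - 1)) (\<lambda>cs. (M4 k1 k2 n cs - 2 * M3 k1 k2 n cs) / (C * C))"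
  proof (rule E_cong)
    fix cs :: "nat list" assume len: "length cs = n - 1" and v: "valid cs"
    have l1: "length cs + 1 = n" using len assms by simp
    have f2: "coal_frac n cs k2 = Af k2 n cs * Bf k2 n cs / C"
      unfolding coal_frac_def C_def Af_def Bf_def
      using coal_count[OF v l1, of k2] k k2n by simp
    have f1: "coal_frac n cs k1 = Pf k1 n cs * Qf k1 n cs / C"
      unfolding coal_frac_def C_def Pf_def Qf_def
      using coal_count[OF v l1, of k1] k k2n by simp
    show "coal_frac n cs k2 * coal_frac n cs k1 = (M4 k1 k2 n cs - 2 * M3 k1 k2 n cs) / (C * C)"
      unfolding f1 f2 M4_def by simp
  qed
  also have "\<dots> = (measure_pmf.expectation (yule_choices (n - 1)) (M4 k1 k2 n)
      - 2 * measure_pmf.expectation (yule_choices (n - 1)) (M3 k1 k2 n)) / (C * C)"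
    by (simp add: E_int)
  also have "\<dots> = (((real k2 + 6) * (real k2 + 1) / ((real k1 + 1) * (real k1 + 2))) *
           (real n * (real n + 1) * (real n + 2) * (real n + 3)) /
           ((real k2 + 1) * (real k2 + 2) * (real k2 + 3) * (real k2 + 4))
      - 2 * ((2 * (real k2 + 1) / ((real k1 + 1) * (real k1 + 2))) *
           (real n * (real n + 1) * (real n + 2)) /
           ((real k2 + 1) * (real k2 + 2) * (real k2 + 3))))
     / ((real n * (real n - 1) / 2) * (real n * (real n - 1) / 2))"
    unfolding conjunct1[OF stage2[OF k k2n]] conjunct2[OF stage2[OF k k2n]] base_vals[OF k] C_def choose2 ..
  also have "\<dots> = 4 * (real n + 1)^2 /
           ((real n - 1)^2 * (real k1 + 1) * (real k1 + 2) * (real k2 + 1) * (real k2 + 2))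
         - 8 * (real n + 1) * (3 * real n - (real k2 - 2)) * (real n - (real k2 + 1)) /
           (real n * (real n - 1)^2 * (real k1 + 1) * (real k1 + 2) * (real k2 + 1)
            * (real k2 + 2) * (real k2 + 3) * (real k2 + 4))"
    by (rule alg) (use assms in auto)
  finally show ?thesis .
qed

end
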